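(* Let $\mathbf{H}\in\mathbb{R}^{m\times n}$ have full column rank, with rows indexed by sensors $\{1,\dots,m\}$ and columns by state variables $\{1,\dots,n\}$. Let $\mathcal{S}_o\subseteq\{1,\dots,m\}$, let $\mathbf{H}_o\in\mathbb{R}^{|\mathcal{S}_o|\times n}$ be the submatrix of $\mathbf{H}$ consisting of the rows indexed by $\mathcal{S}_o$, and let $\mathcal{X}_o$ be the set of indices of the nonzero columns of $\mathbf{H}_o$. Suppose that (i) the state variables in $\mathcal{X}_o$ are observable with respect to $\mathcal{S}_o$; (ii) $\mathcal{C}\subseteq\mathcal{S}_o$ is a critical set with respect to $(\mathcal{S}_o,\mathcal{X}_o)$; (iii) the submatrix of $\mathbf{H}$ obtained by removing the rows indexed by $\mathcal{C}$ does not have full column rank. Let $\mathcal{A}_o$ be the set of vectors $\mathbf{b}\in\mathcal{R}(\mathbf{H}_o)$ whose entries corresponding to the sensors in $\mathcal{S}_o\setminus\mathcal{C}$ are all zero. Then: (1) $\mathcal{A}_o$ is a linear subspace of dimension one; (2) for any nonzero $\mathbf{a}_o\in\mathcal{A}_o$, the vector $\mathbf{a}\in\mathbb{R}^m$ defined by $a_i=(\mathbf{a}_o)_i$ (the entry of $\mathbf{a}_o$ corresponding to sensor $i$) for $i\in\mathcal{C}$ and $a_i=0$ for $i\notin\mathcal{C}$ is an unobservable attack, i.e., $\mathbf{a}\neq\mathbf{0}$ and $\mathbf{a}\in\mathcal{R}(\mathbf{H})$.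
   Context: Linearized model $\mathbf{z}=\mathbf{H}\mathbf{x}+\mathbf{e}$. For a sensor set $\mathcal{S}$ and a set of state variables $\mathcal{X}$, let $\mathbf{H}_{\mathcal{S}}$ be the submatrix of $\mathbf{H}$ keeping only rows in $\mathcal{S}$; the variables in $\mathcal{X}$ are observable with respect to $\mathcal{S}$ if every vector in $\mathcal{N}(\mathbf{H}_{\mathcal{S}})$ has zero entries at all coordinates in $\mathcal{X}$. If the variables in $\mathcal{X}$ are observable with respect to $\mathcal{S}$, a subset $\mathcal{C}\subseteq\mathcal{S}$ is a critical set with respect to $(\mathcal{S},\mathcal{X})$ if the variables in $\mathcal{X}$ are not observable with respect to $\mathcal{S}\setminus\mathcal{C}$, while they remain observable with respect to $\mathcal{S}\setminus\mathcal{C}'$ for every strict subset $\mathcal{C}'\subsetneq\mathcal{C}$. An attack adding $\mathbf{a}$ to the data is unobservable iff $\mathbf{a}\ne\mathbf{0}$ and $\mathbf{a}\in\mathcal{R}(\mathbf{H})$ (then $\mathbf{z}+\mathbf{a}=\mathbf{H}\bar{\mathbf{x}}+\mathbf{e}$ for some $\bar{\mathbf{x}}\neq\mathbf{x}$). *)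

theory Defs
  imports "HOL-Analysis.Analysis"
begin

text \<open>Sensors are indexed by the finite type 'm, state variables by the finite type 'n.
  The row-submatrix H_S is represented by the m x n matrix whose rows outside S are zeroed
  (same null space, same rank); vectors in R^S are represented as vectors in R^m that vanish
  outside S (canonical zero-padding embedding).\<close>

definition keep_rows :: "'m set \<Rightarrow> real^'n^'m \<Rightarrow> real^'n^'m" where
  "keep_rows S H = (\<chi> i. if i \<in> S then H $ i else 0)"

definition full_column_rank :: "real^'n^'m \<Rightarrow> bool" where
  "full_column_rank H \<longleftrightarrow> rank H = CARD('n)"

definition null_rows :: "real^'n^'m \<Rightarrow> 'm set \<Rightarrow> (real^'n) set" where
  "null_rows H S = {x. \<forall>i\<in>S. (H *v x) $ i = 0}"

definition observable :: "real^'n^'m \<Rightarrow> 'm set \<Rightarrow> 'n set \<Rightarrow> bool" where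
  "observable H S X \<longleftrightarrow> (\<forall>x\<in>null_rows H S. \<forall>j\<in>X. x $ j = 0)"

definition critical_set :: "real^'n^'m \<Rightarrow> 'm set \<Rightarrow> 'n set \<Rightarrow> 'm set \<Rightarrow> bool" where
  "critical_set H S X C \<longleftrightarrow>
     observable H S X \<and> C \<subseteq> S \<and> \<not> observable H (S - C) X \<and>
     (\<forall>C'. C' \<subset> C \<longrightarrow> observable H (S - C') X)"

definition unobservable_attack :: "real^'n^'m \<Rightarrow> real^'m \<Rightarrow> bool" where
  "unobservable_attack H a \<longleftrightarrow> a \<noteq> 0 \<and> a \<in> range (\<lambda>x. H *v x)"

end

theory Submission
  imports Defs
begin

lemma kr: "(keep_rows S H *v x) $ i = (if i \<in> S then (H *v x) $ i else 0)"
  by (simp add: keep_rows_def matrix_vector_mult_def)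

theorem theorem3:
  fixes H :: "real^'n^'m" and So C :: "'m set"
  assumes "full_column_rank H"
    and "observable H So {j. \<exists>i\<in>So. H $ i $ j \<noteq> 0}"
    and "critical_set H So {j. \<exists>i\<in>So. H $ i $ j \<noteq> 0} C"
    and "\<not> full_column_rank (keep_rows (- C) H)"
  shows "let Ao = {b \<in> range (\<lambda>x. keep_rows So H *v x). \<forall>i\<in>So - C. b $ i = 0}
         in subspace Ao \<and> dim Ao = 1 \<and>
            (\<forall>ao\<in>Ao. ao \<noteq> 0 \<longrightarrow>
               unobservable_attack H (\<chi> i. if i \<in> C then ao $ i else 0))"
proof -
  define K where "K = keep_rows So H"
  define Xo where "Xo = {j. \<exists>i\<in>So. H $ i $ j \<noteq> 0}"
  define Ao where "Ao = {b \<in> range (\<lambda>x. K *v x). \<forall>i\<in>So - C. b $ i = 0}"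
  have crit: "C \<subseteq> So" "\<And>C'. C' \<subset> C \<Longrightarrow> observable H (So - C') Xo"
    using assms(3) unfolding critical_set_def Xo_def by auto
  obtain z where z: "z \<noteq> 0" "keep_rows (- C) H *v z = 0"
    using assms(4) matrix_nonfull_linear_equations_eq unfolding full_column_rank_def by blast
  have zC: "(H *v z) $ i = 0" if "i \<notin> C" for i
  proof -
    have "(keep_rows (- C) H *v z) $ i = 0" using z(2) by simp
    then show ?thesis using that by (simp add: kr)
  qed
  define v where "v = H *v z"
  have "v \<noteq> 0"
    using assms(1) z(1) matrix_nonfull_linear_equations_eq unfolding full_column_rank_def v_def by blast
  then obtain c where c: "v $ c \<noteq> 0" by (metis vec_eq_iff zero_index)
  have cC: "c \<in> C" using c zC v_def by blast
  have Kz: "K *v z = v"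
    unfolding vec_eq_iff K_def kr v_def using zC crit(1) by auto
  have vA: "v \<in> Ao" unfolding Ao_def using zC v_def by (auto intro!: image_eqI[where x=z] simp: Kz)
  have sub: "subspace Ao"
    unfolding subspace_def Ao_def
  proof (intro conjI ballI allI)
    show "0 \<in> {b \<in> range ((*v) K). \<forall>i\<in>So - C. b $ i = 0}"
      by (auto intro!: image_eqI[where x=0])
  next
    fix x y assume "x \<in> {b \<in> range ((*v) K). \<forall>i\<in>So - C. b $ i = 0}"
      "y \<in> {b \<in> range ((*v) K). \<forall>i\<in>So - C. b $ i = 0}"
    then obtain a b where "x = K *v a" "y = K *v b" "\<forall>i\<in>So - C. x $ i = 0" "\<forall>i\<in>So - C. y $ i = 0"
      by auto
    then show "x + y \<in> {b \<in> range ((*v) K). \<forall>i\<in>So - C. b $ i = 0}"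
      by (auto simp: matrix_vector_right_distrib intro!: image_eqI[where x="a+b"])
  next
    fix x and t :: real assume "x \<in> {b \<in> range ((*v) K). \<forall>i\<in>So - C. b $ i = 0}"
    then obtain a where "x = K *v a" "\<forall>i\<in>So - C. x $ i = 0" by auto
    then show "t *\<^sub>R x \<in> {b \<in> range ((*v) K). \<forall>i\<in>So - C. b $ i = 0}"
      by (auto simp: matrix_vector_mult_scaleR intro!: image_eqI[where x="t *\<^sub>R a"])
  qed
  have key: "\<exists>t. b = t *\<^sub>R v" if bA: "b \<in> Ao" for b
  proof -
    obtain x where x: "b = K *v x" "\<forall>i\<in>So - C. b $ i = 0" using bA unfolding Ao_def by blast
    have Hx: "(H *v x) $ i = 0" if "i \<in> So - C" for i
      using x that unfolding K_def by (simp add: kr)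
    define y where "y = v $ c *\<^sub>R x - (H *v x) $ c *\<^sub>R z"
    have Hy: "H *v y = v $ c *\<^sub>R (H *v x) - (H *v x) $ c *\<^sub>R v"
      unfolding y_def v_def by (simp add: algebra_simps)
    have "y \<in> null_rows H (So - (C - {c}))"
      unfolding null_rows_def
    proof (intro CollectI ballI)
      fix i assume i: "i \<in> So - (C - {c})"
      show "(H *v y) $ i = 0"
      proof (cases "i = c")
        case True then show ?thesis unfolding Hy by simp
      next
        case False
        then have "i \<in> So - C" using i by auto
        then show ?thesis unfolding Hy using Hx zC v_def by simp
      qed
    qed
    moreover have "observable H (So - (C - {c})) Xo" using crit(2) cC by blast
    ultimately have y0: "\<forall>j\<in>Xo. y $ j = 0" unfolding observable_def by blast
    have "K *v y = 0"
      unfolding vec_eq_iff K_def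
    proof
      fix i
      show "(keep_rows So H *v y) $ i = 0 $ i"
      proof (cases "i \<in> So")
        case True
        have "(keep_rows So H *v y) $ i = (\<Sum>j\<in>UNIV. H $ i $ j * y $ j)"
          using True by (simp add: keep_rows_def matrix_vector_mult_def)
        also have "\<dots> = 0"
          by (rule sum.neutral) (use True y0 in \<open>auto simp: Xo_def\<close>)
        finally show ?thesis by simp
      qed (simp add: kr)
    qed
    moreover have "K *v y = v $ c *\<^sub>R b - (H *v x) $ c *\<^sub>R v"
      unfolding y_def x(1) Kz[symmetric] by (simp add: algebra_simps)
    ultimately have "v $ c *\<^sub>R b = (H *v x) $ c *\<^sub>R v" by simp
    then have eq: "v $ c *\<^sub>R b = (H *v x) $ c *\<^sub>R v" .
    have "b = (1 / v $ c) *\<^sub>R (v $ c *\<^sub>R b)" using c by simp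
    also have "\<dots> = ((H *v x) $ c / v $ c) *\<^sub>R v" unfolding eq by simp
    finally have "b = ((H *v x) $ c / v $ c) *\<^sub>R v" .
    then show ?thesis by blast
  qed
  have "Ao = span {v}"
  proof
    show "Ao \<subseteq> span {v}" using key by (auto simp: span_singleton)
    show "span {v} \<subseteq> Ao" using sub vA by (simp add: span_minimal)
  qed
  then have dim: "dim Ao = 1" using \<open>v \<noteq> 0\<close> by simp
  have att: "unobservable_attack H (\<chi> i. if i \<in> C then ao $ i else 0)"
    if ao: "ao \<in> Ao" "ao \<noteq> 0" for ao
  proof -
    obtain x where x: "ao = K *v x" "\<forall>i\<in>So - C. ao $ i = 0" using ao unfolding Ao_def by blast
    have eq: "(\<chi> i. if i \<in> C then ao $ i else 0) = ao"
      unfolding vec_eq_iff using x unfolding K_def by (auto simp: kr)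
    obtain t where t: "ao = t *\<^sub>R v" using key ao by blast
    have "ao = H *v (t *\<^sub>R z)" unfolding t v_def by (simp add: matrix_vector_mult_scaleR)
    then show ?thesis unfolding unobservable_attack_def eq using ao by blast
  qed
  show ?thesis
    unfolding Let_def using sub dim att unfolding Ao_def K_def by blast
qed

end
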